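(* Let $f:\{0,\dots,r-1\}^n\to\mathbb{R}$ be an $r$-valued fitness function with a weak preference for $r-1$ at position $i\in\{1,\dots,n\}$. Consider the $r$-cGA optimizing $f$ with parameter $K$. Then for every $T\in\mathbb{N}$, \[\Pr\left[\min_{t\in\{0,\dots,T\}} p^{(t)}_{i,r-1}\leq p^{(0)}_{i,r-1}-\frac{1}{2r}\right]\leq 2\exp\left(-\frac{K^2}{8Tr^2}\right).\]
   Context: Let $n\geq 1$, $r\geq 2$ be integers and $K>0$. The $r$-cGA maximizing $f$ maintains frequencies $p^{(t)}_{i,j}$ ($i\in\{1,\dots,n\}$, $j\in\{0,\dots,r-1\}$), initialized to $p^{(0)}_{i,j}=1/r$. In iteration $t$ it samples $x,y\in\{0,\dots,r-1\}^n$ independently, each position $i$ independently with $\Pr[x_i=j]=p^{(t)}_{i,j}$; if $f(x)<f(y)$ it swaps $x$ and $y$; then it sets $p^{(t+1)}_{i,j}=p^{(t)}_{i,j}+\frac1K(\mathbf{1}[x_i=j]-\mathbf{1}[y_i=j])$ for all $i,j$, with no margins. It is assumed that $1/r$ is an integer multiple of $1/K$. The function $f$ has a weak preference for value $j$ at position $i$ if for all $x\in\{0,\dots,r-1\}^n$, $f(x_1,\dots,x_i,\dots,x_n)\leq f(x_1,\dots,x_{i-1},j,x_{i+1},\dots,x_n)$. *)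

theory Defs
  imports "HOL-Probability.Probability"
begin

text \<open>Search space: x with x i in {0,...,r-1} for positions i in {1..n} (extensional, PiE).
  Frequencies: p :: nat => nat => real, p i j for position i and value j.\<close>

type_synonym freqs = "nat \<Rightarrow> nat \<Rightarrow> real"

definition search_space :: "nat \<Rightarrow> nat \<Rightarrow> (nat \<Rightarrow> nat) set" where
  "search_space n r = PiE {1..n} (\<lambda>_. {..<r})"

definition weak_pref :: "nat \<Rightarrow> nat \<Rightarrow> ((nat \<Rightarrow> nat) \<Rightarrow> real) \<Rightarrow> nat \<Rightarrow> nat \<Rightarrow> bool" where
  "weak_pref n r f i j \<longleftrightarrow> (\<forall>x \<in> search_space n r. f x \<le> f (x(i := j)))"

definition sample_pos :: "nat \<Rightarrow> freqs \<Rightarrow> nat \<Rightarrow> nat pmf" where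
  "sample_pos r p i = embed_pmf (\<lambda>j. if j < r then p i j else 0)"

definition sample :: "nat \<Rightarrow> nat \<Rightarrow> freqs \<Rightarrow> (nat \<Rightarrow> nat) pmf" where
  "sample n r p = Pi_pmf {1..n} undefined (\<lambda>i. sample_pos r p i)"

definition ind :: "bool \<Rightarrow> real" where
  "ind b = (if b then 1 else 0)"

text \<open>One iteration of the r-cGA (no margins).\<close>
definition cga_step :: "((nat \<Rightarrow> nat) \<Rightarrow> real) \<Rightarrow> nat \<Rightarrow> nat \<Rightarrow> real \<Rightarrow> freqs \<Rightarrow> freqs pmf" where
  "cga_step f n r K p =
     do { x0 \<leftarrow> sample n r p;
          y0 \<leftarrow> sample n r p;
          let x = (if f x0 < f y0 then y0 else x0);
          let y = (if f x0 < f y0 then x0 else y0);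
          return_pmf (\<lambda>i j. p i j + (ind (x i = j) - ind (y i = j)) / K) }"

definition init_freqs :: "nat \<Rightarrow> freqs" where
  "init_freqs r = (\<lambda>i j. 1 / real r)"

fun cga_traj :: "((nat \<Rightarrow> nat) \<Rightarrow> real) \<Rightarrow> nat \<Rightarrow> nat \<Rightarrow> real \<Rightarrow> nat \<Rightarrow> freqs list pmf" where
  "cga_traj f n r K 0 = return_pmf [init_freqs r]"
| "cga_traj f n r K (Suc t) =
     bind_pmf (cga_traj f n r K t) (\<lambda>ps. map_pmf (\<lambda>q. ps @ [q]) (cga_step f n r K (last ps)))"

end

theory Submission
  imports Defs
begin


fun stopv :: "real \<Rightarrow> real list \<Rightarrow> real" where
  "stopv th [] = 0"
| "stopv th [a] = a"
| "stopv th (a # b # xs) = (if a \<le> th then a else stopv th (b # xs))"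

lemma stopv_snoc: "xs \<noteq> [] \<Longrightarrow> stopv th (xs @ [q]) = (if \<exists>a\<in>set xs. a \<le> th then stopv th xs else q)"
  by (induction th xs rule: stopv.induct) auto

lemma stopv_in: "xs \<noteq> [] \<Longrightarrow> stopv th xs \<in> set xs"
  by (induction th xs rule: stopv.induct) auto

lemma stopv_le: "a \<in> set xs \<Longrightarrow> a \<le> th \<Longrightarrow> stopv th xs \<le> th"
  by (induction th xs rule: stopv.induct) auto

definition swp :: "((nat \<Rightarrow> nat) \<Rightarrow> real) \<Rightarrow> (nat \<Rightarrow> nat) \<times> (nat \<Rightarrow> nat) \<Rightarrow> (nat \<Rightarrow> nat) \<times> (nat \<Rightarrow> nat)" where
  "swp f xy = (if f (fst xy) < f (snd xy) then (snd xy, fst xy) else xy)"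

definition upd :: "real \<Rightarrow> freqs \<Rightarrow> (nat \<Rightarrow> nat) \<times> (nat \<Rightarrow> nat) \<Rightarrow> freqs" where
  "upd K p xy = (\<lambda>i j. p i j + (ind (fst xy i = j) - ind (snd xy i = j)) / K)"

lemma cga_step_alt: "cga_step f n r K p = map_pmf (\<lambda>xy. upd K p (swp f xy)) (pair_pmf (sample n r p) (sample n r p))"
  unfolding cga_step_def pair_pmf_def map_pmf_def
  apply (simp add: bind_assoc_pmf bind_return_pmf Let_def upd_def swp_def)
  apply (intro bind_pmf_cong refl)
  apply (auto simp: fun_eq_iff)
  done

lemma integrable_pmf_bound:
  assumes "\<And>x. x \<in> set_pmf M \<Longrightarrow> \<bar>g x\<bar> \<le> B"
  shows "integrable (measure_pmf M) (g :: _ \<Rightarrow> real)"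
  by (rule measure_pmf.integrable_const_bound[where B=B]) (auto intro!: AE_pmfI assms)

definition valid :: "nat \<Rightarrow> nat \<Rightarrow> real \<Rightarrow> freqs \<Rightarrow> bool" where
  "valid n r K p \<longleftrightarrow> (\<forall>i\<in>{1..n}. (\<forall>j<r. \<exists>k::nat. p i j = real k / K) \<and> (\<Sum>j<r. p i j) = 1)"

lemma valid_nonneg: "valid n r K p \<Longrightarrow> K > 0 \<Longrightarrow> i \<in> {1..n} \<Longrightarrow> j < r \<Longrightarrow> p i j \<ge> 0"
  unfolding valid_def by fastforce

lemma valid_le1: assumes "valid n r K p" "K > 0" "i \<in> {1..n}" "j < r" shows "p i j \<le> 1"
proof -
  have "p i j \<le> (\<Sum>j<r. p i j)"
    by (rule member_le_sum) (use assms valid_nonneg in auto)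
  thus ?thesis using assms unfolding valid_def by auto
qed

lemma set_sample_pos:
  assumes "valid n r K p" "K > 0" "i \<in> {1..n}"
  shows "set_pmf (sample_pos r p i) = {j. j < r \<and> p i j \<noteq> 0}"
proof -
  have nn: "\<And>j. 0 \<le> (if j < r then p i j else 0)" using valid_nonneg[OF assms(1,2,3)] by auto
  have "(\<integral>\<^sup>+j. ennreal (if j < r then p i j else 0) \<partial>count_space UNIV)
        = (\<integral>\<^sup>+j. ennreal (p i j) * indicator {..<r} j \<partial>count_space UNIV)"
    by (intro nn_integral_cong) (auto simp: indicator_def)
  also have "\<dots> = (\<integral>\<^sup>+j. ennreal (p i j) \<partial>count_space {..<r})"
    by (subst nn_integral_count_space_indicator) auto
  also have "\<dots> = (\<Sum>j<r. ennreal (p i j))"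
    by (subst nn_integral_count_space_finite) auto
  also have "\<dots> = ennreal (\<Sum>j<r. p i j)"
    by (rule sum_ennreal) (use valid_nonneg[OF assms(1,2,3)] in auto)
  also have "\<dots> = 1" using assms unfolding valid_def by auto
  finally have "(\<integral>\<^sup>+j. ennreal (if j < r then p i j else 0) \<partial>count_space UNIV) = 1" .
  then show ?thesis unfolding sample_pos_def
    by (subst set_embed_pmf[OF nn]) auto
qed

lemma set_sample:
  assumes "valid n r K p" "K > 0" "x \<in> set_pmf (sample n r p)"
  shows "x \<in> search_space n r" "\<And>i. i \<in> {1..n} \<Longrightarrow> x i < r \<and> p i (x i) \<noteq> 0"
proof -
  have x: "x \<in> PiE_dflt {1..n} undefined (set_pmf \<circ> sample_pos r p)"
    using assms(3) unfolding sample_def by (simp add: set_Pi_pmf)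
  show "\<And>i. i \<in> {1..n} \<Longrightarrow> x i < r \<and> p i (x i) \<noteq> 0"
    using x set_sample_pos[OF assms(1,2)] by (auto simp: PiE_dflt_def)
  then show "x \<in> search_space n r"
    using x unfolding search_space_def PiE_dflt_def by (auto simp: PiE_def extensional_def)
qed

lemma sum_ind: "a < (r::nat) \<Longrightarrow> (\<Sum>j<r. ind (a = j)) = 1"
  unfolding ind_def using sum.delta'[of "{..<r}" a "\<lambda>_. (1::real)"] by simp

lemma valid_upd:
  assumes v: "valid n r K p" and K: "K > 0" and x: "x \<in> set_pmf (sample n r p)" and y: "y \<in> set_pmf (sample n r p)"
  shows "valid n r K (upd K p (x, y))"
  unfolding valid_def
proof (intro ballI conjI allI impI)
  fix i j assume i: "i \<in> {1..n}" and j: "j < r"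
  obtain k :: nat where k: "p i j = real k / K" using v i j unfolding valid_def by blast
  have xi: "x i < r" "p i (x i) \<noteq> 0" and yi: "y i < r" "p i (y i) \<noteq> 0"
    using set_sample(2)[OF v K x i] set_sample(2)[OF v K y i] by auto
  show "\<exists>k::nat. upd K p (x, y) i j = real k / K"
  proof (cases "x i = j \<and> y i \<noteq> j")
    case True
    then show ?thesis by (intro exI[of _ "k+1"]) (simp add: upd_def k ind_def add_divide_distrib)
  next
    case F1: False
    show ?thesis
    proof (cases "y i = j \<and> x i \<noteq> j")
      case True
      then have "k \<ge> 1" using yi k by (cases k) auto
      then show ?thesis using True
        by (intro exI[of _ "k-1"]) (simp add: upd_def k ind_def diff_divide_distrib of_nat_diff)
    next
      case False
      then show ?thesis using F1
        by (intro exI[of _ "k"]) (auto simp add: upd_def k ind_def)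
    qed
  qed
next
  fix i assume i: "i \<in> {1..n}"
  have xi: "x i < r" and yi: "y i < r"
    using set_sample(2)[OF v K x i] set_sample(2)[OF v K y i] by auto
  have "(\<Sum>j<r. upd K p (x, y) i j) = (\<Sum>j<r. p i j) + ((\<Sum>j<r. ind (x i = j)) - (\<Sum>j<r. ind (y i = j))) / K"
    by (simp add: upd_def sum.distrib sum_subtractf sum_divide_distrib[symmetric])
  also have "\<dots> = 1" using v i xi yi by (simp add: sum_ind valid_def)
  finally show "(\<Sum>j<r. upd K p (x, y) i j) = 1" .
qed

lemma valid_step:
  assumes v: "valid n r K p" and K: "K > 0" and q: "q \<in> set_pmf (cga_step f n r K p)"
  shows "valid n r K q"
proof -
  obtain x y where xy: "x \<in> set_pmf (sample n r p)" "y \<in> set_pmf (sample n r p)" and q: "q = upd K p (swp f (x, y))"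
    using q by (auto simp: cga_step_alt)
  show ?thesis using valid_upd[OF v K xy] valid_upd[OF v K xy(2,1)] q by (auto simp: swp_def)
qed


definition Dv :: "((nat \<Rightarrow> nat) \<Rightarrow> real) \<Rightarrow> nat \<Rightarrow> nat \<Rightarrow> (nat \<Rightarrow> nat) \<times> (nat \<Rightarrow> nat) \<Rightarrow> real" where
  "Dv f i R xy = ind (fst (swp f xy) i = R) - ind (snd (swp f xy) i = R)"

definition sigma :: "nat \<Rightarrow> (nat \<Rightarrow> nat) \<times> (nat \<Rightarrow> nat) \<Rightarrow> (nat \<Rightarrow> nat) \<times> (nat \<Rightarrow> nat)" where
  "sigma i xy = ((fst xy)(i := snd xy i), (snd xy)(i := fst xy i))"

lemma sigma_sigma: "sigma i (sigma i z) = z"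
  by (cases z) (auto simp: sigma_def)

lemma inj_sigma: "inj (sigma i)"
  by (metis injI sigma_sigma)

lemma D_sym:
  assumes wp: "weak_pref n r f i R" and x: "x \<in> search_space n r" and y: "y \<in> search_space n r"
    and i: "i \<in> {1..n}"
  shows "Dv f i R (x, y) + Dv f i R (sigma i (x, y)) \<ge> 0"
proof -
  have xy': "x(i := y i) \<in> search_space n r" "y(i := x i) \<in> search_space n r"
    using x y i unfolding search_space_def by (auto simp: PiE_def extensional_def Pi_def)
  have w1: "f (x(i := y i)) \<le> f (x(i := y i, i := R))" and w2: "f (y(i := x i)) \<le> f (y(i := x i, i := R))"
    and w3: "f x \<le> f (x(i:=R))" and w4: "f y \<le> f (y(i:=R))"
    using wp xy' x y unfolding weak_pref_def by auto
  show ?thesis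
  proof (cases "x i = R")
    case True
    then have "x(i := y i, i := R) = x" by auto
    then show ?thesis using w1 w4 True
      by (cases "y i = R") (auto simp: Dv_def swp_def sigma_def ind_def)
  next
    case False
    then have "y i = R \<Longrightarrow> y(i := x i, i := R) = y" by auto
    then show ?thesis using w2 w3 False
      by (cases "y i = R") (auto simp: Dv_def swp_def sigma_def ind_def)
  qed
qed

definition Qf :: "nat set \<Rightarrow> 'a \<Rightarrow> (nat \<Rightarrow> 'a pmf) \<Rightarrow> nat \<Rightarrow> (nat \<Rightarrow> 'a) \<Rightarrow> real" where
  "Qf A d P i x = (if \<forall>k. k \<notin> A \<longrightarrow> x k = d then \<Prod>k\<in>A-{i}. pmf (P k) (x k) else 0)"

lemma pmf_Pi_split:
  assumes "finite A" "i \<in> A"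
  shows "pmf (Pi_pmf A d P) x = pmf (P i) (x i) * Qf A d P i x"
  using assms unfolding Qf_def by (subst pmf_Pi) (auto simp: prod.remove)

lemma Qf_upd: "i \<in> A \<Longrightarrow> Qf A d P i (x(i := b)) = Qf A d P i x"
  unfolding Qf_def by (intro if_cong prod.cong) auto

lemma sigma_invariant:
  assumes "finite A" "i \<in> A"
  shows "map_pmf (sigma i) (pair_pmf (Pi_pmf A d P) (Pi_pmf A d P)) = pair_pmf (Pi_pmf A d P) (Pi_pmf A d P)"
proof (rule pmf_eqI)
  fix z :: "(nat \<Rightarrow> nat) \<times> (nat \<Rightarrow> nat)"
  obtain x y where z: "z = (x, y)" by (cases z)
  let ?M = "Pi_pmf A d P"
  have "pmf (map_pmf (sigma i) (pair_pmf ?M ?M)) z = pmf (map_pmf (sigma i) (pair_pmf ?M ?M)) (sigma i (sigma i z))"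
    by (simp add: sigma_sigma)
  also have "\<dots> = pmf (pair_pmf ?M ?M) (sigma i z)" by (rule pmf_map_inj'[OF inj_sigma])
  also have "\<dots> = pmf ?M (x(i := y i)) * pmf ?M (y(i := x i))" by (simp add: z sigma_def pmf_pair)
  also have "\<dots> = pmf ?M x * pmf ?M y"
    by (simp add: pmf_Pi_split[OF assms] Qf_upd[OF assms(2)])
  finally show "pmf (map_pmf (sigma i) (pair_pmf ?M ?M)) z = pmf (pair_pmf ?M ?M) z" by (simp add: z pmf_pair)
qed


lemma abs_Dv: "\<bar>Dv f i R xy\<bar> \<le> 1"
  by (auto simp: Dv_def ind_def)

lemma ED_nonneg:
  assumes wp: "weak_pref n r f i R" and i: "i \<in> {1..n}" and v: "valid n r K p" and K: "K > 0"
  shows "measure_pmf.expectation (pair_pmf (sample n r p) (sample n r p)) (Dv f i R) \<ge> 0"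
proof -
  define MM where "MM = pair_pmf (sample n r p) (sample n r p)"
  have int1: "integrable (measure_pmf MM) (Dv f i R)"
    by (rule integrable_pmf_bound[where B=1]) (rule abs_Dv)
  have int2: "integrable (measure_pmf MM) (\<lambda>z. Dv f i R (sigma i z))"
    by (rule integrable_pmf_bound[where B=1]) (rule abs_Dv)
  have "measure_pmf.expectation (map_pmf (sigma i) MM) (Dv f i R) = measure_pmf.expectation MM (Dv f i R)"
    unfolding MM_def sample_def using i by (subst sigma_invariant) auto
  then have eq: "measure_pmf.expectation MM (\<lambda>z. Dv f i R (sigma i z)) = measure_pmf.expectation MM (Dv f i R)"
    by simp
  have "0 \<le> measure_pmf.expectation MM (\<lambda>z. Dv f i R z + Dv f i R (sigma i z))"
  proof (rule integral_nonneg_AE, rule AE_pmfI)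
    fix z assume "z \<in> set_pmf MM"
    then obtain x y where z: "z = (x, y)" "x \<in> set_pmf (sample n r p)" "y \<in> set_pmf (sample n r p)"
      unfolding MM_def by (cases z) auto
    show "0 \<le> Dv f i R z + Dv f i R (sigma i z)"
      using D_sym[OF wp set_sample(1)[OF v K z(2)] set_sample(1)[OF v K z(3)] i] z(1) by simp
  qed
  also have "\<dots> = 2 * measure_pmf.expectation MM (Dv f i R)"
    using int1 int2 eq by (simp add: Bochner_Integration.integral_add)
  finally show ?thesis unfolding MM_def by simp
qed

lemma upd_Dv: "upd K p (swp f xy) i R - p i R = Dv f i R xy / K"
  by (simp add: upd_def Dv_def diff_divide_distrib)

lemma step_mgf:
  assumes wp: "weak_pref n r f i R" and i: "i \<in> {1..n}" and v: "valid n r K p" and K: "K > 0" and l: "l > 0"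
  shows "(\<integral>\<^sup>+q. ennreal (exp (-l * (q i R - p i R))) \<partial>cga_step f n r K p) \<le> ennreal (exp (l^2 / (2*K^2)))"
proof -
  define N where "N = cga_step f n r K p"
  define MM where "MM = pair_pmf (sample n r p) (sample n r p)"
  define g where "g = (\<lambda>q::freqs. - (q i R - p i R))"
  have N: "N = map_pmf (\<lambda>xy. upd K p (swp f xy)) MM" unfolding N_def MM_def by (rule cga_step_alt)
  interpret H: interval_bounded_random_variable "measure_pmf N" g "-1/K" "1/K"
  proof
    show "g \<in> borel_measurable (measure_pmf N)" by simp
    show "AE x in measure_pmf N. g x \<in> {- 1 / K..1 / K}"
    proof (rule AE_pmfI)
      fix q assume "q \<in> set_pmf N"
      then obtain xy where q: "q = upd K p (swp f xy)" unfolding N by auto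
      show "g q \<in> {- 1 / K..1 / K}" using abs_Dv[of f i R xy] K unfolding g_def q upd_Dv
        by (auto simp: abs_le_iff field_simps)
    qed
  qed
  have Eg: "measure_pmf.expectation N g = - measure_pmf.expectation MM (Dv f i R) / K"
  proof -
    have e: "(\<lambda>x. p i R - upd K p (swp f x) i R) = (\<lambda>x. - (Dv f i R x / K))"
      using upd_Dv[of K p f _ i R] by (auto simp: fun_eq_iff algebra_simps)
    show ?thesis unfolding N g_def by (simp add: e)
  qed
  have Eg0: "measure_pmf.expectation N g \<le> 0"
    unfolding Eg using ED_nonneg[OF wp i v K] K unfolding MM_def by simp
  have "(\<integral>\<^sup>+q. ennreal (exp (-l * (q i R - p i R))) \<partial>N) \<le> (\<integral>\<^sup>+q. ennreal (exp (l * (g q - measure_pmf.expectation N g))) \<partial>N)"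
  proof (rule nn_integral_mono)
    fix q
    have "-l * (q i R - p i R) \<le> l * (g q - measure_pmf.expectation N g)"
      using Eg0 l unfolding g_def by (simp add: algebra_simps mult_nonpos_nonneg mult_nonneg_nonpos)
    then show "ennreal (exp (-l * (q i R - p i R))) \<le> ennreal (exp (l * (g q - measure_pmf.expectation N g)))"
      by (intro ennreal_leI) simp
  qed
  also have "\<dots> \<le> ennreal (exp (l\<^sup>2 * (1 / K - - 1 / K)\<^sup>2 / 8))"
    by (rule H.Hoeffdings_lemma_nn_integral[OF l])
  also have "l\<^sup>2 * (1 / K - - 1 / K)\<^sup>2 / 8 = l^2 / (2*K^2)"
    using K by (simp add: field_simps power2_eq_square)
  finally show ?thesis unfolding N_def .
qed


lemma stopv_last: "xs \<noteq> [] \<Longrightarrow> \<not> (\<exists>a\<in>set xs. a \<le> th) \<Longrightarrow> stopv th xs = last xs"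
  by (induction th xs rule: stopv.induct) auto

lemma traj_inv:
  assumes K: "K > 0" and v0: "valid n r K (init_freqs r)"
  shows "ps \<in> set_pmf (cga_traj f n r K T) \<Longrightarrow> length ps = Suc T \<and> (\<forall>p\<in>set ps. valid n r K p)"
proof (induction T arbitrary: ps)
  case 0
  then show ?case using v0 by simp
next
  case (Suc T)
  then obtain ps0 q where ps: "ps = ps0 @ [q]" and ps0: "ps0 \<in> set_pmf (cga_traj f n r K T)"
    and q: "q \<in> set_pmf (cga_step f n r K (last ps0))" by auto
  have IH: "length ps0 = Suc T" "\<forall>p\<in>set ps0. valid n r K p" using Suc.IH[OF ps0] by auto
  then have "ps0 \<noteq> []" by auto
  then have "valid n r K (last ps0)" using IH(2) by auto
  then have "valid n r K q" using valid_step[OF _ K q] by simp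
  then show ?case using IH ps by auto
qed


lemma traj_mgf:
  assumes wp: "weak_pref n r f i R" and i: "i \<in> {1..n}" and K: "K > 0" and l: "l > 0"
    and v0: "valid n r K (init_freqs r)" and s0: "s0 \<le> init_freqs r i R"
  shows "(\<integral>\<^sup>+ps. ennreal (exp (-l * (stopv th (map (\<lambda>p. p i R) ps) - s0))) \<partial>cga_traj f n r K T)
          \<le> ennreal (exp (real T * (l^2 / (2*K^2))))"
proof (induction T)
  case 0
  have "0 \<le> l * (init_freqs r i R - s0)" using l s0 by simp
  then show ?case by simp
next
  case (Suc T)
  define e where "e = exp (l^2 / (2*K^2))"
  define Z where "Z = (\<lambda>ps. ennreal (exp (-l * (stopv th (map (\<lambda>p. p i R) ps) - s0))))"
  have e1: "1 \<le> e" unfolding e_def using K by simp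
  have "(\<integral>\<^sup>+ps. Z ps \<partial>cga_traj f n r K (Suc T))
        = (\<integral>\<^sup>+ps. (\<integral>\<^sup>+q. Z (ps @ [q]) \<partial>cga_step f n r K (last ps)) \<partial>cga_traj f n r K T)"
    by simp
  also have "\<dots> \<le> (\<integral>\<^sup>+ps. Z ps * ennreal e \<partial>cga_traj f n r K T)"
  proof (rule nn_integral_mono_AE, rule AE_pmfI)
    fix ps assume ps: "ps \<in> set_pmf (cga_traj f n r K T)"
    have inv: "length ps = Suc T" "\<forall>p\<in>set ps. valid n r K p" using traj_inv[OF K v0 ps] by auto
    then have ne: "ps \<noteq> []" by auto
    then have vl: "valid n r K (last ps)" using inv by auto
    let ?vs = "map (\<lambda>p. p i R) ps"
    have vne: "?vs \<noteq> []" using ne by simp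
    show "(\<integral>\<^sup>+q. Z (ps @ [q]) \<partial>cga_step f n r K (last ps)) \<le> Z ps * ennreal e"
    proof (cases "\<exists>a\<in>set ?vs. a \<le> th")
      case True
      then have "\<And>q. Z (ps @ [q]) = Z ps" unfolding Z_def using stopv_snoc[OF vne] by simp
      then have "(\<integral>\<^sup>+q. Z (ps @ [q]) \<partial>cga_step f n r K (last ps)) = Z ps" by simp
      also have "\<dots> \<le> Z ps * ennreal e"
      proof -
        have "Z ps * ennreal 1 \<le> Z ps * ennreal e" by (rule mult_left_mono) (use e1 in \<open>auto intro: ennreal_leI\<close>)
        then show ?thesis by simp
      qed
      finally show ?thesis .
    next
      case False
      have sl: "stopv th ?vs = last ps i R" using stopv_last[OF vne False] ne by (simp add: last_map)
      have "\<And>q. Z (ps @ [q]) = ennreal (exp (-l * (q i R - last ps i R))) * Z ps"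
        unfolding Z_def using stopv_snoc[OF vne, of th] False sl
        by (simp add: ennreal_mult''[symmetric] exp_add[symmetric] algebra_simps)
      then have "(\<integral>\<^sup>+q. Z (ps @ [q]) \<partial>cga_step f n r K (last ps))
           = (\<integral>\<^sup>+q. ennreal (exp (-l * (q i R - last ps i R))) \<partial>cga_step f n r K (last ps)) * Z ps"
        by (simp add: nn_integral_multc)
      also have "\<dots> \<le> ennreal e * Z ps"
        by (rule mult_right_mono) (use step_mgf[OF wp i vl K l] in \<open>simp_all add: e_def\<close>)
      finally show ?thesis by (simp add: mult.commute)
    qed
  qed
  also have "\<dots> = (\<integral>\<^sup>+ps. Z ps \<partial>cga_traj f n r K T) * ennreal e"
    by (rule nn_integral_multc) simp
  also have "\<dots> \<le> ennreal (exp (real T * (l^2 / (2*K^2)))) * ennreal e"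
    by (rule mult_right_mono) (use Suc.IH in \<open>simp_all add: Z_def\<close>)
  also have "\<dots> = ennreal (exp (real (Suc T) * (l^2 / (2*K^2))))"
    unfolding e_def by (simp add: ennreal_mult''[symmetric] exp_add[symmetric] algebra_simps add_divide_distrib)
  finally show ?case unfolding Z_def .
qed



theorem theorem4:
  fixes f :: "(nat \<Rightarrow> nat) \<Rightarrow> real" and n r i T :: nat and K :: real
  assumes "n \<ge> 1" and "r \<ge> 2" and "K > 0"
    and "\<exists>m::nat. 1 / real r = real m * (1 / K)"
    and "i \<in> {1..n}"
    and "weak_pref n r f i (r - 1)"
  shows "measure_pmf.prob (cga_traj f n r K T)
           {ps. Min ((\<lambda>t. (ps ! t) i (r - 1)) ` {0..T})
                  \<le> init_freqs r i (r - 1) - 1 / (2 * real r)}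
         \<le> 2 * exp (- (K ^ 2) / (8 * real T * (real r) ^ 2))"
proof (cases "T = 0")
  case True
  have "measure_pmf.prob (cga_traj f n r K T)
           {ps. Min ((\<lambda>t. (ps ! t) i (r - 1)) ` {0..T})
                  \<le> init_freqs r i (r - 1) - 1 / (2 * real r)} \<le> 1"
    by (rule measure_pmf.prob_le_1)
  moreover have "2 * exp (- (K ^ 2) / (8 * real T * (real r) ^ 2)) = 2" using True by simp
  ultimately show ?thesis by linarith
next
  case False
  note K = assms(3) and i = assms(5) and wp = assms(6)
  define R where "R = r - 1"
  define s0 where "s0 = init_freqs r i R"
  define a where "a = 1 / (2 * real r)"
  define th where "th = s0 - a"
  define l where "l = a * K^2 / real T"
  define M where "M = cga_traj f n r K T"
  define E where "E = {ps. Min ((\<lambda>t. (ps ! t) i R) ` {0..T}) \<le> s0 - a}"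
  define Z where "Z = (\<lambda>ps. ennreal (exp (-l * (stopv th (map (\<lambda>p. p i R) ps) - s0))))"
  have r: "real r \<ge> 2" using assms(2) by simp
  have apos: "a > 0" unfolding a_def using r by simp
  have Tpos: "real T > 0" using False by simp
  have lpos: "l > 0" unfolding l_def using apos K Tpos by simp
  have v0: "valid n r K (init_freqs r)"
  proof -
    obtain m :: nat where m: "1 / real r = real m * (1 / K)" using assms(4) by blast
    have km: "K = real r * real m" using m K r by (auto simp: field_simps)
    show ?thesis unfolding valid_def init_freqs_def
      using m r km by (auto intro!: exI[of _ m])
  qed
  have mgf: "(\<integral>\<^sup>+ps. Z ps \<partial>M) \<le> ennreal (exp (real T * (l^2 / (2*K^2))))"
    unfolding Z_def M_def by (rule traj_mgf[OF wp[folded R_def] i K lpos v0]) (simp add: s0_def)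
  have "ennreal (measure_pmf.prob M E) = (\<integral>\<^sup>+ps. indicator E ps \<partial>M)"
    by (simp add: measure_pmf.emeasure_eq_measure)
  also have "\<dots> \<le> (\<integral>\<^sup>+ps. Z ps * ennreal (exp (- l * a)) \<partial>M)"
  proof (rule nn_integral_mono_AE, rule AE_pmfI)
    fix ps assume ps: "ps \<in> set_pmf M"
    have len: "length ps = Suc T" using traj_inv[OF K v0 ps[unfolded M_def]] by auto
    show "indicator E ps \<le> Z ps * ennreal (exp (- l * a))"
    proof (cases "ps \<in> E")
      case True
      let ?S = "(\<lambda>t. (ps ! t) i R) ` {0..T}"
      have "Min ?S \<in> ?S" by (rule Min_in) auto
      then obtain t where t0: "t \<in> {0..T}" and tm: "Min ?S = (ps ! t) i R" by blast
      have t: "t \<le> T" "(ps ! t) i R \<le> th"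
        using True t0 tm unfolding E_def th_def by auto
      have "(ps ! t) i R \<in> set (map (\<lambda>p. p i R) ps)" using t len unfolding set_map
        by (intro imageI nth_mem) simp
      then have st: "stopv th (map (\<lambda>p. p i R) ps) \<le> th" using t(2) by (rule stopv_le)
      have "0 \<le> -l * (stopv th (map (\<lambda>p. p i R) ps) - s0) + - l * a"
      proof -
        have "stopv th (map (\<lambda>p. p i R) ps) - s0 + a \<le> 0" using st unfolding th_def by simp
        then have "l * (stopv th (map (\<lambda>p. p i R) ps) - s0 + a) \<le> 0"
          using lpos by (simp add: mult_nonneg_nonpos)
        then show ?thesis by (simp add: algebra_simps)
      qed
      then have "1 \<le> exp (-l * (stopv th (map (\<lambda>p. p i R) ps) - s0) + - l * a)" by simp
      then have "ennreal 1 \<le> ennreal (exp (-l * (stopv th (map (\<lambda>p. p i R) ps) - s0) + - l * a))"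
        by (rule ennreal_leI)
      then show ?thesis using True unfolding Z_def
        by (simp add: ennreal_mult''[symmetric] exp_add[symmetric])
    next
      case False
      then show ?thesis by simp
    qed
  qed
  also have "\<dots> = (\<integral>\<^sup>+ps. Z ps \<partial>M) * ennreal (exp (- l * a))"
    by (rule nn_integral_multc) simp
  also have "\<dots> \<le> ennreal (exp (real T * (l^2 / (2*K^2)))) * ennreal (exp (- l * a))"
    by (rule mult_right_mono[OF mgf]) simp
  also have "\<dots> = ennreal (exp (real T * (l^2 / (2*K^2)) + - l * a))"
    by (simp add: ennreal_mult''[symmetric] exp_add[symmetric])
  also have "real T * (l^2 / (2*K^2)) + - l * a = - (K ^ 2) / (8 * real T * (real r) ^ 2)"
  proof -
    have e1: "real T * (l^2 / (2*K^2)) = a^2 * K^2 / (2 * real T)"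
      unfolding l_def using K Tpos by (simp add: power2_eq_square)
    have e2: "l * a = a^2 * K^2 / real T" unfolding l_def by (simp add: power2_eq_square)
    have e3: "a^2 = 1 / (4 * (real r)^2)" unfolding a_def by (simp add: power2_eq_square)
    have e4: "real T * (l^2 / (2*K^2)) = K^2 / (8 * real T * (real r)^2)" unfolding e1 e3 by simp
    have e5: "l * a = K^2 / (4 * real T * (real r)^2)" unfolding e2 e3 by simp
    have "real T * (l^2 / (2*K^2)) + - l * a = K^2 / (8 * real T * (real r)^2) - K^2 / (4 * real T * (real r)^2)"
      using e4 e5 by simp
    also have "\<dots> = - (K ^ 2) / (8 * real T * (real r) ^ 2)" using Tpos r by (simp add: field_simps)
    finally show ?thesis .
  qed
  finally have "measure_pmf.prob M E \<le> exp (- (K ^ 2) / (8 * real T * (real r) ^ 2))"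
    by (simp add: ennreal_le_iff)
  also have "\<dots> \<le> 2 * exp (- (K ^ 2) / (8 * real T * (real r) ^ 2))" by simp
  finally show ?thesis unfolding M_def E_def R_def a_def s0_def by simp
qed

end
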